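(* Let $\mathcal P_2$ be a path between nodes $u_0$ and $u_1$, and suppose there is a node $v$ on a shortest path between $u_0$ and $u_1$ such that $\min_{v'\in\mathcal P_2} d_{v,v'}\ge\gamma$. Then $$\ell(\mathcal P_2)\ge 2^{\frac{\gamma}{6\,\delta_{\mathrm{worst}}(G)+2}+1}-1.$$
   Context: $G=(V,E)$ is a finite connected undirected graph with $n\ge 4$ nodes and $d_{u,v}$ denotes the shortest-path distance (number of edges); $\ell(\mathcal P)$ denotes the number of edges of a path $\mathcal P$. For any four nodes $w_1,w_2,w_3,w_4$, form the three sums $d_{w_1,w_2}+d_{w_3,w_4}$, $d_{w_1,w_3}+d_{w_2,w_4}$, $d_{w_1,w_4}+d_{w_2,w_3}$, order them as $S\le M\le L$, and set $\delta_{w_1,w_2,w_3,w_4}=(L-M)/2$; $\delta_{\mathrm{worst}}(G)=\max_{w_1,w_2,w_3,w_4\in V}\delta_{w_1,w_2,w_3,w_4}$. *)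

theory Defs
  imports Complex_Main
begin

definition graph :: "'a set \<Rightarrow> ('a \<Rightarrow> 'a \<Rightarrow> bool) \<Rightarrow> bool" where
  "graph V E \<longleftrightarrow> finite V \<and> (\<forall>x y. E x y \<longrightarrow> x \<in> V \<and> y \<in> V)
     \<and> (\<forall>x y. E x y \<longrightarrow> E y x) \<and> (\<forall>x. \<not> E x x)"

definition walk :: "'a set \<Rightarrow> ('a \<Rightarrow> 'a \<Rightarrow> bool) \<Rightarrow> 'a list \<Rightarrow> bool" where
  "walk V E p \<longleftrightarrow> p \<noteq> [] \<and> set p \<subseteq> V \<and> (\<forall>i. Suc i < length p \<longrightarrow> E (p ! i) (p ! Suc i))"

definition walk_betw :: "'a set \<Rightarrow> ('a \<Rightarrow> 'a \<Rightarrow> bool) \<Rightarrow> 'a \<Rightarrow> 'a list \<Rightarrow> 'a \<Rightarrow> bool" where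
  "walk_betw V E u p v \<longleftrightarrow> walk V E p \<and> hd p = u \<and> last p = v"

definition path_betw :: "'a set \<Rightarrow> ('a \<Rightarrow> 'a \<Rightarrow> bool) \<Rightarrow> 'a \<Rightarrow> 'a list \<Rightarrow> 'a \<Rightarrow> bool" where
  "path_betw V E u p v \<longleftrightarrow> walk_betw V E u p v \<and> distinct p"

definition plen :: "'a list \<Rightarrow> nat" where
  "plen p = length p - 1"

definition connected_graph :: "'a set \<Rightarrow> ('a \<Rightarrow> 'a \<Rightarrow> bool) \<Rightarrow> bool" where
  "connected_graph V E \<longleftrightarrow> (\<forall>u\<in>V. \<forall>v\<in>V. \<exists>p. walk_betw V E u p v)"

definition gdist :: "'a set \<Rightarrow> ('a \<Rightarrow> 'a \<Rightarrow> bool) \<Rightarrow> 'a \<Rightarrow> 'a \<Rightarrow> nat" where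
  "gdist V E u v = (LEAST n. \<exists>p. path_betw V E u p v \<and> plen p = n)"

definition shortest_path :: "'a set \<Rightarrow> ('a \<Rightarrow> 'a \<Rightarrow> bool) \<Rightarrow> 'a \<Rightarrow> 'a list \<Rightarrow> 'a \<Rightarrow> bool" where
  "shortest_path V E u p v \<longleftrightarrow> path_betw V E u p v \<and> plen p = gdist V E u v"

definition delta4 :: "'a set \<Rightarrow> ('a \<Rightarrow> 'a \<Rightarrow> bool) \<Rightarrow> 'a \<Rightarrow> 'a \<Rightarrow> 'a \<Rightarrow> 'a \<Rightarrow> real" where
  "delta4 V E w1 w2 w3 w4 =
     (let s = sort [gdist V E w1 w2 + gdist V E w3 w4,
                    gdist V E w1 w3 + gdist V E w2 w4,
                    gdist V E w1 w4 + gdist V E w2 w3]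
      in (real (s ! 2) - real (s ! 1)) / 2)"

definition delta_worst :: "'a set \<Rightarrow> ('a \<Rightarrow> 'a \<Rightarrow> bool) \<Rightarrow> real" where
  "delta_worst V E = Max {delta4 V E w1 w2 w3 w4 | w1 w2 w3 w4.
                           w1 \<in> V \<and> w2 \<in> V \<and> w3 \<in> V \<and> w4 \<in> V}"

end

theory Submission
  imports Defs
begin

lemma s3: fixes a b c :: nat
  shows "real a \<le> max (real b) (real c) + (real (sort [a,b,c] ! 2) - real (sort [a,b,c] ! 1))
     \<and> sort [a,b,c] ! 1 \<le> sort [a,b,c] ! 2"
  by (cases "a \<le> b"; cases "b \<le> c"; cases "a \<le> c"; simp)

lemma path_rev:
  assumes "graph V E" "path_betw V E u p w"
  shows "path_betw V E w (rev p) u"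
proof -
  have sym: "\<And>x y. E x y \<Longrightarrow> E y x" using assms(1) unfolding graph_def by blast
  have w: "walk V E p" "hd p = u" "last p = w" "distinct p"
    using assms(2) unfolding path_betw_def walk_betw_def by auto
  have "\<forall>i. Suc i < length (rev p) \<longrightarrow> E (rev p ! i) (rev p ! Suc i)"
  proof (intro allI impI)
    fix i assume i: "Suc i < length (rev p)"
    let ?j = "length p - Suc (Suc i)"
    have "E (p ! ?j) (p ! Suc ?j)" using w(1) i unfolding walk_def by auto
    moreover have "rev p ! i = p ! Suc ?j" "rev p ! Suc i = p ! ?j" using i
      by (auto simp: rev_nth Suc_diff_Suc)
    ultimately show "E (rev p ! i) (rev p ! Suc i)" using sym by simp
  qed
  then show ?thesis using w unfolding path_betw_def walk_betw_def walk_def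
    by (auto simp: hd_rev last_rev)
qed

lemma gdist_sym:
  assumes "graph V E"
  shows "gdist V E x y = gdist V E y x"
proof -
  have "(\<exists>p. path_betw V E x p y \<and> plen p = n) \<longleftrightarrow> (\<exists>p. path_betw V E y p x \<and> plen p = n)" for n
    using path_rev[OF assms] by (metis length_rev plen_def rev_rev_ident)
  then show ?thesis unfolding gdist_def by simp
qed

lemma gdist_le:
  assumes "path_betw V E u p w"
  shows "gdist V E u w \<le> plen p"
  unfolding gdist_def using assms by (auto intro: Least_le)

lemma gdist_self:
  assumes "x \<in> V" shows "gdist V E x x = 0"
proof -
  have "path_betw V E x [x] x" using assms
    unfolding path_betw_def walk_betw_def walk_def by auto
  from gdist_le[OF this] show ?thesis by (simp add: plen_def)
qed

lemma gdist_edge: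
  assumes "graph V E" "E x y"
  shows "gdist V E x y \<le> 1"
proof -
  have "x \<in> V" "y \<in> V" "x \<noteq> y" using assms unfolding graph_def by auto
  then have "path_betw V E x [x,y] y" using assms(2)
    unfolding path_betw_def walk_betw_def walk_def
    by (auto simp: less_Suc_eq nth_Cons split: nat.splits)
  from gdist_le[OF this] show ?thesis by (simp add: plen_def)
qed

lemma four_point:
  assumes "graph V E" "w1 \<in> V" "w2 \<in> V" "w3 \<in> V" "w4 \<in> V"
  shows "real (gdist V E w1 w2 + gdist V E w3 w4)
     \<le> max (real (gdist V E w1 w3 + gdist V E w2 w4)) (real (gdist V E w1 w4 + gdist V E w2 w3))
       + 2 * delta_worst V E"
    and "0 \<le> delta_worst V E"
proof -
  let ?S = "{delta4 V E w1 w2 w3 w4 | w1 w2 w3 w4. w1 \<in> V \<and> w2 \<in> V \<and> w3 \<in> V \<and> w4 \<in> V}"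
  have fin: "finite V" using assms(1) unfolding graph_def by auto
  have "?S = (\<lambda>(a,b,c,d). delta4 V E a b c d) ` (V \<times> V \<times> V \<times> V)"
    by (auto simp: image_iff) (metis (no_types, lifting) case_prod_conv mem_Sigma_iff)
  then have finS: "finite ?S" using fin by simp
  have le: "delta4 V E w1 w2 w3 w4 \<le> delta_worst V E"
    unfolding delta_worst_def using assms by (intro Max_ge[OF finS]) blast
  define a where "a = gdist V E w1 w2 + gdist V E w3 w4"
  define b where "b = gdist V E w1 w3 + gdist V E w2 w4"
  define c where "c = gdist V E w1 w4 + gdist V E w2 w3"
  have d4: "delta4 V E w1 w2 w3 w4 = (real (sort [a,b,c] ! 2) - real (sort [a,b,c] ! 1)) / 2"
    unfolding delta4_def Let_def a_def b_def c_def by simp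
  have A: "real a \<le> max (real b) (real c) + (real (sort [a,b,c] ! 2) - real (sort [a,b,c] ! 1))"
    and B: "sort [a,b,c] ! 1 \<le> sort [a,b,c] ! 2" using s3[of a b c] by auto
  have C: "real a \<le> max (real b) (real c) + 2 * delta_worst V E" using le A unfolding d4 by (simp add: max_def split: if_splits)
  then show "real (gdist V E w1 w2 + gdist V E w3 w4)
     \<le> max (real (gdist V E w1 w3 + gdist V E w2 w4)) (real (gdist V E w1 w4 + gdist V E w2 w3))
       + 2 * delta_worst V E"
    unfolding a_def b_def c_def .
  show "0 \<le> delta_worst V E" using le B unfolding d4 by simp
qed


lemma pow_54: "2 powr (5/4::real) \<le> 3"
proof -
  have "(2 powr (5/4::real))^4 = 2 powr (5/4 * 4)" by (simp add: powr_powr powr_realpow[symmetric] powr_power)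
  also have "... = 32" by simp
  finally have "(2 powr (5/4::real))^4 \<le> 3^4" by simp
  then show ?thesis using power_le_imp_le_base[of "2 powr (5/4::real)" 3 3] by (simp add: numeral_eq_Suc)
qed

lemma mid_arith: fixes i j N :: nat assumes "j - i \<le> 2 * N" "i \<le> j"
  shows "i \<le> (i+j) div 2 \<and> (i+j) div 2 \<le> j \<and> (i+j) div 2 - i \<le> N \<and> j - (i+j) div 2 \<le> N"
proof -
  obtain d where d: "j = i + d" using assms(2) le_Suc_ex by blast
  have h: "(i+j) div 2 = i + d div 2" unfolding d by simp
  have "d div 2 * 2 \<le> d" "d \<le> d div 2 * 2 + 1" by linarith+
  then show ?thesis unfolding h using assms d by linarith
qed

lemma halving:
  assumes G: "graph V E" and W: "walk V E P" and vV: "v \<in> V"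
  shows "i \<le> j \<Longrightarrow> j < length P \<Longrightarrow> j - i \<le> 2^k \<Longrightarrow> \<exists>t. i \<le> t \<and> t \<le> j \<and>
     2 * real (gdist V E v (P!t)) \<le> real (gdist V E v (P!i)) + real (gdist V E v (P!j))
        - real (gdist V E (P!i) (P!j)) + 2 * real k * delta_worst V E + 1"
proof (induction k arbitrary: i j)
  case 0
  have inV: "\<And>t. t < length P \<Longrightarrow> P ! t \<in> V" using W unfolding walk_def by auto
  have dpos: "0 \<le> delta_worst V E" using four_point(2)[OF G vV vV vV vV] .
  show ?case
  proof (cases "j = i")
    case True
    then show ?thesis using gdist_self[OF inV[OF 0(2)], of E] 0 by auto
  next
    case False
    then have j: "j = Suc i" using 0 by auto
    have "E (P!i) (P!j)" using W 0 j unfolding walk_def by auto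
    then have e: "gdist V E (P!i) (P!j) \<le> 1" using gdist_edge[OF G] by auto
    show ?thesis
    proof (cases "gdist V E v (P!i) \<le> gdist V E v (P!j)")
      case True
      then show ?thesis using e j by (intro exI[of _ i]) auto
    next
      case False
      then show ?thesis using e j by (intro exI[of _ j]) auto
    qed
  qed
next
  case (Suc k)
  have inV: "\<And>t. t < length P \<Longrightarrow> P ! t \<in> V" using W unfolding walk_def by auto
  define m where "m = (i + j) div 2"
  have N: "j - i \<le> 2 * 2^k" using Suc(4) by simp
  have m1: "i \<le> m" "m \<le> j" "m - i \<le> 2^k" "j - m \<le> 2^k" unfolding m_def using mid_arith[OF N Suc(2)] by auto
  obtain t1 where t1: "i \<le> t1" "t1 \<le> m" "2 * real (gdist V E v (P!t1)) \<le> real (gdist V E v (P!i)) + real (gdist V E v (P!m))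
        - real (gdist V E (P!i) (P!m)) + 2 * real k * delta_worst V E + 1"
    using Suc.IH[of i m] m1 Suc(3) by auto
  obtain t2 where t2: "m \<le> t2" "t2 \<le> j" "2 * real (gdist V E v (P!t2)) \<le> real (gdist V E v (P!m)) + real (gdist V E v (P!j))
        - real (gdist V E (P!m) (P!j)) + 2 * real k * delta_worst V E + 1"
    using Suc.IH[of m j] m1 Suc(3) by auto
  have fp: "real (gdist V E v (P!m) + gdist V E (P!i) (P!j))
     \<le> max (real (gdist V E v (P!i) + gdist V E (P!m) (P!j))) (real (gdist V E v (P!j) + gdist V E (P!m) (P!i)))
       + 2 * delta_worst V E"
    using four_point(1)[OF G vV inV inV inV] m1 Suc(3) by simp
  have sy: "gdist V E (P!m) (P!i) = gdist V E (P!i) (P!m)" using gdist_sym[OF G] by simp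
  have eq: "2 * real (Suc k) * delta_worst V E = 2 * real k * delta_worst V E + 2 * delta_worst V E"
    by (simp add: algebra_simps)
  show ?case
  proof (cases "real (gdist V E v (P!i) + gdist V E (P!m) (P!j)) \<le> real (gdist V E v (P!j) + gdist V E (P!m) (P!i))")
    case True
    then have "real (gdist V E v (P!m) + gdist V E (P!i) (P!j)) \<le> real (gdist V E v (P!j) + gdist V E (P!m) (P!i)) + 2 * delta_worst V E"
      using fp by (simp add: max_def)
    then show ?thesis using t1 m1 sy unfolding eq by (intro exI[of _ t1]) auto
  next
    case False
    then have "real (gdist V E v (P!m) + gdist V E (P!i) (P!j)) \<le> real (gdist V E v (P!i) + gdist V E (P!m) (P!j)) + 2 * delta_worst V E"
      using fp by (simp add: max_def)
    then show ?thesis using t2 m1 unfolding eq by (intro exI[of _ t2]) auto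
  qed
qed


lemma geo_split:
  assumes Q: "path_betw V E u0 Q u1" "plen Q = gdist V E u0 u1" and v: "v \<in> set Q"
  shows "gdist V E u0 v + gdist V E v u1 \<le> gdist V E u0 u1"
proof -
  obtain i where i: "i < length Q" "v = Q ! i" using v by (auto simp: in_set_conv_nth)
  have w: "Q \<noteq> []" "set Q \<subseteq> V" "\<forall>n. Suc n < length Q \<longrightarrow> E (Q ! n) (Q ! Suc n)"
    "hd Q = u0" "last Q = u1" "distinct Q"
    using Q(1) unfolding path_betw_def walk_betw_def walk_def by auto
  have lt: "last (take (Suc i) Q) = Q ! i" using i by (simp add: take_Suc_conv_app_nth)
  have p1: "path_betw V E u0 (take (Suc i) Q) v"
    unfolding path_betw_def walk_betw_def walk_def using w i lt
    by (auto simp: hd_take dest: in_set_takeD)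
  have p2: "path_betw V E v (drop i Q) u1"
    unfolding path_betw_def walk_betw_def walk_def using w i
    by (auto simp: hd_drop_conv_nth dest: in_set_dropD)
  have "gdist V E u0 v \<le> i" using gdist_le[OF p1] i by (simp add: plen_def)
  moreover have "gdist V E v u1 \<le> length Q - 1 - i" using gdist_le[OF p2] i by (simp add: plen_def)
  ultimately show ?thesis using Q(2) i unfolding plen_def by linarith
qed

theorem corollary5:
  fixes V :: "'a set" and E :: "'a \<Rightarrow> 'a \<Rightarrow> bool"
    and u0 u1 v :: 'a and P2 Q :: "'a list" and \<gamma> :: real
  assumes "graph V E" and "connected_graph V E" and "card V \<ge> 4"
    and "path_betw V E u0 P2 u1"
    and "shortest_path V E u0 Q u1" and "v \<in> set Q"
    and "\<gamma> > 0"
    and "\<forall>v'\<in>set P2. real (gdist V E v v') \<ge> \<gamma>"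
  shows "real (plen P2) \<ge> 2 powr (\<gamma> / (6 * delta_worst V E + 2) + 1) - 1"
proof -
  note G = assms(1)
  define \<delta> where "\<delta> = delta_worst V E"
  define l where "l = plen P2"
  have W: "walk V E P2" "hd P2 = u0" "last P2 = u1" using assms(4) unfolding path_betw_def walk_betw_def by auto
  have ne: "P2 \<noteq> []" using W unfolding walk_def by auto
  have Qp: "path_betw V E u0 Q u1" "plen Q = gdist V E u0 u1" using assms(5) unfolding shortest_path_def by auto
  have vV: "v \<in> V" using Qp(1) assms(6) unfolding path_betw_def walk_betw_def walk_def by auto
  have dpos: "0 \<le> \<delta>" unfolding \<delta>_def using four_point(2)[OF G vV vV vV vV] .
  define k where "k = (LEAST k. l \<le> 2^k)"
  have ex: "l \<le> 2^l" using less_exp[of l] by simp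
  have lk: "l \<le> 2^k" unfolding k_def using LeastI[of "\<lambda>k. l \<le> 2^k", OF ex] .
  have lk2: "k \<ge> 1 \<Longrightarrow> 2^(k-1) < l" unfolding k_def
    using not_less_Least[of "k - 1" "\<lambda>k. l \<le> 2^k"] k_def by fastforce
  have len: "length P2 = Suc l" unfolding l_def plen_def using ne by simp
  obtain t where t: "t \<le> l" "2 * real (gdist V E v (P2!t)) \<le> real (gdist V E v (P2!0)) + real (gdist V E v (P2!l))
        - real (gdist V E (P2!0) (P2!l)) + 2 * real k * \<delta> + 1"
    using halving[OF G W(1) vV, of 0 l k] len lk unfolding \<delta>_def by auto
  have e0: "P2 ! 0 = u0" using W ne by (simp add: hd_conv_nth)
  have el: "P2 ! l = u1" using W ne len by (simp add: last_conv_nth)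
  have gs: "gdist V E u0 v + gdist V E v u1 \<le> gdist V E u0 u1" using geo_split[OF Qp assms(6)] .
  have "gdist V E v u0 = gdist V E u0 v" using gdist_sym[OF G] by simp
  then have D: "2 * real (gdist V E v (P2!t)) \<le> 2 * real k * \<delta> + 1"
    using t(2) gs unfolding e0 el by linarith
  define D where "D = gdist V E v (P2!t)"
  have gD: "\<gamma> \<le> real D" unfolding D_def using assms(8) t(1) len by auto
  then have D1: "D \<ge> 1" using assms(7) by (cases D) auto
  have D2: "real D \<le> real k * \<delta> + 1/2" using D unfolding D_def by simp
  have k1: "k \<ge> 1" using D1 D2 by (cases k) auto
  have den: "6 * \<delta> + 2 > 0" using dpos by simp
  have e1: "\<gamma> / (6 * \<delta> + 2) \<le> (real k * \<delta> + 1/2) / (6 * \<delta> + 2)"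
    using gD D2 den by (simp add: divide_right_mono)
  show ?thesis unfolding \<delta>_def[symmetric] l_def[symmetric]
  proof (cases "k = 1")
    case True
    have "(real k * \<delta> + 1/2) / (6 * \<delta> + 2) \<le> 1/4" using True den dpos by (simp add: field_simps)
    then have "\<gamma> / (6 * \<delta> + 2) + 1 \<le> 5/4" using e1 by linarith
    then have "2 powr (\<gamma> / (6 * \<delta> + 2) + 1) \<le> 2 powr (5/4)" by (intro powr_mono) auto
    moreover have "l = 2" using lk lk2 True by simp
    then have "real l = 2" by simp
    ultimately show "2 powr (\<gamma> / (6 * \<delta> + 2) + 1) - 1 \<le> real l" using pow_54 by linarith
  next
    case False
    then have k2: "k \<ge> 2" using k1 by simp
    have "(real k * \<delta> + 1/2) / (6 * \<delta> + 2) \<le> real k / 6" using k2 den dpos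
      by (simp add: field_simps)
    then have ee: "\<gamma> / (6 * \<delta> + 2) + 1 \<le> real k / 6 + 1" using e1 by linarith
    show "2 powr (\<gamma> / (6 * \<delta> + 2) + 1) - 1 \<le> real l"
    proof (cases "k = 2")
      case True
      then have "\<gamma> / (6 * \<delta> + 2) + 1 \<le> 2" using ee True by linarith
      then have "2 powr (\<gamma> / (6 * \<delta> + 2) + 1) \<le> 2 powr 2" by (intro powr_mono) auto
      moreover have "l \<ge> 3" using lk2 True by simp
      ultimately show ?thesis by simp
    next
      case False
      then have "k \<ge> 3" using k2 by simp
      then have "\<gamma> / (6 * \<delta> + 2) + 1 \<le> real (k - 1)"
      proof -
        have "real (k - 1) = real k - 1" using k2 by (simp add: of_nat_diff)
        moreover have "real k / 6 + 1 \<le> real k - 1" using \<open>k \<ge> 3\<close> by linarith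
        ultimately show ?thesis using ee by linarith
      qed
      then have "2 powr (\<gamma> / (6 * \<delta> + 2) + 1) \<le> 2 powr real (k - 1)" by (intro powr_mono) auto
      also have "... = 2 ^ (k - 1)" by (simp add: powr_realpow)
      also have "... \<le> real l"
      proof -
        have "2^(k-1) < l" using lk2 k2 by simp
        then have "real (2^(k-1)) \<le> real l" by linarith
        then show ?thesis by simp
      qed
      finally show ?thesis by simp
    qed
  qed
qed

end
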